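(* Let $\mathbf H\in\mathbb R^{n\times n}$ be symmetric positive semidefinite with eigenvalues $\lambda_1(\mathbf H)\ge\dots\ge\lambda_n(\mathbf H)\ge0$, let $\Phi(\mathbf M)=\mathbf M-\frac{\mathbf M^2}{\mathrm{tr}(\mathbf M)}$, and let $q\in[n]$ be arbitrary. Then for every $r\in\mathbb N$, $\lambda_1(\Phi^r(\mathbf H))\le\eta(r)$, where $\eta$ is the decreasing solution of the ordinary differential equation $$\frac{d\eta(t)}{dt}=-\frac{\eta(t)^2}{q\,\eta(t)+\sum_{l=q+1}^n\lambda_l(\mathbf H)},\qquad\eta(0)=\lambda_1(\mathbf H).$$
   Context: $\Phi^r$ denotes the $r$-fold composition of $\Phi$, and $\lambda_1$ the largest eigenvalue. *)

theory Defs
  imports Complex_Main "Jordan_Normal_Form.Char_Poly"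
begin

definition psd_mat :: "real mat \<Rightarrow> bool" where
  "psd_mat A \<longleftrightarrow> (\<forall>v \<in> carrier_vec (dim_row A). v \<bullet> (A *\<^sub>v v) \<ge> 0)"

definition lambda_max :: "real mat \<Rightarrow> real" where
  "lambda_max A = Max {k. eigenvalue A k}"

definition mat_trace :: "real mat \<Rightarrow> real" where
  "mat_trace A = (\<Sum>i<dim_row A. A $$ (i, i))"

definition Phi :: "real mat \<Rightarrow> real mat" where
  "Phi M = M - (1 / mat_trace M) \<cdot>\<^sub>m (M * M)"

end

theory Submission
  imports Defs "Jordan_Normal_Form.Schur_Decomposition" "HOL-Analysis.Analysis"
begin


lemma trace_mult_comm:
  fixes A B :: "real mat"
  assumes "A \<in> carrier_mat n m" "B \<in> carrier_mat m n"
  shows "mat_trace (A * B) = mat_trace (B * A)"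
proof -
  have "mat_trace (A * B) = (\<Sum>i<n. \<Sum>k<m. A $$ (i,k) * B $$ (k,i))"
    using assms by (simp add: mat_trace_def scalar_prod_def atLeast0LessThan)
  also have "\<dots> = (\<Sum>k<m. \<Sum>i<n. B $$ (k,i) * A $$ (i,k))"
    by (subst sum.swap) (simp add: mult.commute)
  also have "\<dots> = mat_trace (B * A)"
    using assms by (simp add: mat_trace_def scalar_prod_def atLeast0LessThan)
  finally show ?thesis .
qed

lemma ut_step:
  fixes U :: "real mat" and c :: real
  assumes U: "U \<in> carrier_mat n n" and ut: "upper_triangular U"
  shows "upper_triangular (U - c \<cdot>\<^sub>m (U * U))"
    and "\<And>i. i < n \<Longrightarrow> (U - c \<cdot>\<^sub>m (U * U)) $$ (i,i) = U $$ (i,i) - c * (U $$ (i,i))^2"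
proof -
  have z: "U $$ (i,j) = 0" if "j < i" "i < n" for i j using ut that U by auto
  have prod_low: "(U * U) $$ (i,j) = 0" if "j < i" "i < n" for i j
  proof -
    have "(U * U) $$ (i,j) = (\<Sum>k<n. U $$ (i,k) * U $$ (k,j))"
      using U that by (simp add: scalar_prod_def atLeast0LessThan)
    also have "\<dots> = 0"
    proof (rule sum.neutral, intro ballI)
      fix k assume "k \<in> {..<n}"
      show "U $$ (i,k) * U $$ (k,j) = 0"
      proof (cases "k < i")
        case True then show ?thesis using z that by simp
      next
        case False then have "j < k" "k < n" using that \<open>k \<in> {..<n}\<close> by auto
        then show ?thesis using z by simp
      qed
    qed
    finally show ?thesis .
  qed
  have prod_diag: "(U * U) $$ (i,i) = (U $$ (i,i))^2" if "i < n" for i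
  proof -
    have "(U * U) $$ (i,i) = (\<Sum>k<n. U $$ (i,k) * U $$ (k,i))"
      using U that by (simp add: scalar_prod_def atLeast0LessThan)
    also have "\<dots> = U $$ (i,i) * U $$ (i,i)"
    proof -
      have "(\<Sum>k<n. U $$ (i,k) * U $$ (k,i)) = U $$ (i,i) * U $$ (i,i) + (\<Sum>k\<in>{..<n}-{i}. U $$ (i,k) * U $$ (k,i))"
        using that by (subst sum.remove[of _ i]) auto
      also have "(\<Sum>k\<in>{..<n}-{i}. U $$ (i,k) * U $$ (k,i)) = 0"
      proof (rule sum.neutral, intro ballI)
        fix k assume k: "k \<in> {..<n}-{i}"
        show "U $$ (i,k) * U $$ (k,i) = 0"
        proof (cases "k < i")
          case True then show ?thesis using z that by simp
        next
          case False then have "i < k" "k < n" using k by auto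
          then show ?thesis using z by simp
        qed
      qed
      finally show ?thesis by simp
    qed
    finally show ?thesis by (simp add: power2_eq_square)
  qed
  show "upper_triangular (U - c \<cdot>\<^sub>m (U * U))"
    unfolding upper_triangular_def using U prod_low z by auto
  show "\<And>i. i < n \<Longrightarrow> (U - c \<cdot>\<^sub>m (U * U)) $$ (i,i) = U $$ (i,i) - c * (U $$ (i,i))^2"
    using U prod_diag by auto
qed

lemma sim_step:
  fixes M U P Q :: "real mat"
  assumes sim: "similar_mat_wit M U P Q" and M: "M \<in> carrier_mat n n"
  shows "similar_mat_wit (Phi M) (U - (1 / mat_trace U) \<cdot>\<^sub>m (U * U)) P Q"
    and "mat_trace M = mat_trace U"
proof -
  have C: "U \<in> carrier_mat n n" "P \<in> carrier_mat n n" "Q \<in> carrier_mat n n"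
    and PQ: "P * Q = 1\<^sub>m n" and QP: "Q * P = 1\<^sub>m n" and MU: "M = P * U * Q"
    using sim M unfolding similar_mat_wit_def Let_def by auto
  have "mat_trace M = mat_trace ((P * U) * Q)" using MU by simp
  also have "\<dots> = mat_trace (Q * (P * U))" using C by (intro trace_mult_comm) auto
  also have "Q * (P * U) = U" using C QP by (simp add: assoc_mult_mat[symmetric])
  finally show tr: "mat_trace M = mat_trace U" .
  have MM: "M * M = P * (U * U) * Q"
  proof -
    have c1: "P * U \<in> carrier_mat n n" "U * Q \<in> carrier_mat n n" "P * U * Q \<in> carrier_mat n n"
      "U * U \<in> carrier_mat n n" "P * (U * U) \<in> carrier_mat n n" using C by auto
    have "M * M = (P * U * Q) * (P * U * Q)" using MU by simp
    also have "\<dots> = P * U * (Q * (P * U * Q))" by (rule assoc_mult_mat[OF c1(1) C(3) c1(3)])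
    also have "Q * (P * U * Q) = (Q * (P * U)) * Q" by (rule assoc_mult_mat[OF C(3) c1(1) C(3), symmetric])
    also have "Q * (P * U) = (Q * P) * U" by (rule assoc_mult_mat[OF C(3) C(2) C(1), symmetric])
    also have "(Q * P) * U = U" using C QP by simp
    also have "P * U * (U * Q) = P * (U * (U * Q))" by (rule assoc_mult_mat[OF C(2) C(1) c1(2)])
    also have "U * (U * Q) = (U * U) * Q" by (rule assoc_mult_mat[OF C(1) C(1) C(3), symmetric])
    also have "P * (U * U * Q) = P * (U * U) * Q" by (rule assoc_mult_mat[OF C(2) c1(4) C(3), symmetric])
    finally show ?thesis .
  qed
  have "Phi M = P * U * Q - (1 / mat_trace U) \<cdot>\<^sub>m (P * (U * U) * Q)"
    unfolding Phi_def tr MM MU[symmetric] ..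
  also have "\<dots> = P * (U - (1 / mat_trace U) \<cdot>\<^sub>m (U * U)) * Q"
  proof -
    define c where "c = 1 / mat_trace U"
    have V: "c \<cdot>\<^sub>m (U * U) \<in> carrier_mat n n" "U * U \<in> carrier_mat n n"
      "P * U \<in> carrier_mat n n" "P * (U * U) \<in> carrier_mat n n" using C by auto
    have "P * (U - c \<cdot>\<^sub>m (U * U)) * Q = (P * U - P * (c \<cdot>\<^sub>m (U * U))) * Q"
      by (simp add: mult_minus_distrib_mat[OF C(2) C(1) V(1)])
    also have "P * (c \<cdot>\<^sub>m (U * U)) = c \<cdot>\<^sub>m (P * (U * U))" by (rule mult_smult_distrib[OF C(2) V(2)])
    also have "(P * U - c \<cdot>\<^sub>m (P * (U * U))) * Q = P * U * Q - (c \<cdot>\<^sub>m (P * (U * U))) * Q"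
      by (rule minus_mult_distrib_mat[OF V(3) _ C(3)]) (use V in auto)
    also have "(c \<cdot>\<^sub>m (P * (U * U))) * Q = c \<cdot>\<^sub>m (P * (U * U) * Q)"
      by (rule mult_smult_assoc_mat[OF V(4) C(3)])
    finally show ?thesis unfolding c_def by (rule sym)
  qed
  finally have eq: "Phi M = P * (U - (1 / mat_trace U) \<cdot>\<^sub>m (U * U)) * Q" .
  have PhiC: "Phi M \<in> carrier_mat n n" unfolding eq using C by auto
  have VC: "U - (1 / mat_trace U) \<cdot>\<^sub>m (U * U) \<in> carrier_mat n n" using C by auto
  have dr: "dim_row (Phi M) = n" using PhiC by auto
  show "similar_mat_wit (Phi M) (U - (1 / mat_trace U) \<cdot>\<^sub>m (U * U)) P Q"
    unfolding similar_mat_wit_def Let_def dr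
    using PhiC VC C(2,3) PQ QP eq by blast
qed



fun museq :: "nat \<Rightarrow> (nat \<Rightarrow> real) \<Rightarrow> nat \<Rightarrow> nat \<Rightarrow> real" where
  "museq n d 0 = d"
| "museq n d (Suc r) = (\<lambda>i. museq n d r i - (1 / (\<Sum>j<n. museq n d r j)) * (museq n d r i)^2)"

lemma invariant:
  fixes H U0 P Q :: "real mat"
  assumes H: "H \<in> carrier_mat n n" and sim: "similar_mat_wit H U0 P Q"
    and ut: "upper_triangular U0" and dg: "\<And>i. i < n \<Longrightarrow> U0 $$ (i,i) = d i"
  shows "\<exists>U. similar_mat_wit ((Phi ^^ r) H) U P Q \<and> upper_triangular U \<and> U \<in> carrier_mat n n
     \<and> (\<forall>i<n. U $$ (i,i) = museq n d r i)"
proof (induction r)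
  case 0
  have dr: "dim_row H = n" using H by simp
  have "U0 \<in> carrier_mat n n" using sim unfolding similar_mat_wit_def Let_def dr by blast
  moreover have "similar_mat_wit ((Phi ^^ 0) H) U0 P Q" using sim by (simp only: funpow_0)
  ultimately show ?case using ut dg by (intro exI[of _ U0]) (simp only: museq.simps, blast)
next
  case (Suc r)
  then obtain U where U: "similar_mat_wit ((Phi ^^ r) H) U P Q" "upper_triangular U" "U \<in> carrier_mat n n"
     "\<forall>i<n. U $$ (i,i) = museq n d r i" by blast
  have MC: "(Phi ^^ r) H \<in> carrier_mat n n"
  proof -
    have "{(Phi ^^ r) H, U, P, Q} \<subseteq> carrier_mat (dim_row ((Phi ^^ r) H)) (dim_row ((Phi ^^ r) H))"
      using U(1) unfolding similar_mat_wit_def Let_def by blast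
    then have "(Phi ^^ r) H \<in> carrier_mat (dim_row ((Phi ^^ r) H)) (dim_row ((Phi ^^ r) H))"
      "U \<in> carrier_mat (dim_row ((Phi ^^ r) H)) (dim_row ((Phi ^^ r) H))" by auto
    then show ?thesis using U(3) by (metis carrier_matD(1))
  qed
  have tr: "mat_trace U = (\<Sum>j<n. museq n d r j)"
    using U(3,4) by (simp add: mat_trace_def)
  define V where "V = U - (1 / mat_trace U) \<cdot>\<^sub>m (U * U)"
  have "similar_mat_wit ((Phi ^^ Suc r) H) V P Q"
    using sim_step(1)[OF U(1) MC] unfolding V_def by (simp only: funpow.simps o_apply)
  moreover have "upper_triangular V" unfolding V_def by (rule ut_step(1)[OF U(3,2)])
  moreover have "V \<in> carrier_mat n n" unfolding V_def using U(3) by auto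
  moreover have "\<forall>i<n. V $$ (i,i) = museq n d (Suc r) i"
    using ut_step(2)[OF U(3,2)] U(4) tr unfolding V_def by simp
  ultimately show ?case by (intro exI[of _ V]) (simp only:)
qed


lemma eig_set:
  fixes A U P Q :: "real mat"
  assumes A: "A \<in> carrier_mat n n" and sim: "similar_mat_wit A U P Q"
    and ut: "upper_triangular U" and U: "U \<in> carrier_mat n n"
  shows "{k. eigenvalue A k} = (\<lambda>i. U $$ (i,i)) ` {..<n}"
proof -
  have "similar_mat A U" unfolding similar_mat_def using sim by (intro exI)
  then have cp: "char_poly A = (\<Prod> a \<leftarrow> diag_mat U. [:- a, 1:])"
    using char_poly_similar char_poly_upper_triangular[OF U ut] by metis
  have "eigenvalue A k \<longleftrightarrow> k \<in> set (diag_mat U)" for k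
  proof -
    have "eigenvalue A k \<longleftrightarrow> poly (char_poly A) k = 0" by (rule eigenvalue_root_char_poly[OF A])
    also have "\<dots> \<longleftrightarrow> 0 \<in> set (map (\<lambda>a. poly [:- a, 1:] k) (diag_mat U))"
      unfolding cp poly_prod_list prod_list_zero_iff by (simp add: o_def)
    also have "\<dots> \<longleftrightarrow> k \<in> set (diag_mat U)" by auto
    finally show ?thesis .
  qed
  moreover have "set (diag_mat U) = (\<lambda>i. U $$ (i,i)) ` {..<n}"
    using U by (auto simp: diag_mat_def)
  ultimately show ?thesis by auto
qed


definition hh :: "nat \<Rightarrow> real \<Rightarrow> real \<Rightarrow> real" where
  "hh q S x = x - x^2 / (real q * x + S)"

definition psi :: "nat \<Rightarrow> real \<Rightarrow> real \<Rightarrow> real" where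
  "psi q S e = S / e - real q * ln e"

lemma psi_deriv: "e > 0 \<Longrightarrow> DERIV (psi q S) e :> (- S / e^2 - real q / e)"
  unfolding psi_def
  by (auto intro!: derivative_eq_intros simp: field_simps power2_eq_square)

lemma aux1: fixes X Y :: real assumes "X \<noteq> 0" "Y \<noteq> 0" shows "(-X/Y)*(-Y/X) = 1"
proof -
  have "(-X/Y)*(-Y/X) = (X/Y)*(Y/X)" by simp
  also have "\<dots> = 1" using assms by simp
  finally show ?thesis .
qed

lemma lyap_deriv:
  assumes q: "q \<ge> 1" and S: "S \<ge> 0" and pos: "eta t > 0"
    and d: "(eta has_real_derivative (- (eta t)\<^sup>2 / (real q * eta t + S))) (at t within X)"
  shows "((\<lambda>t. psi q S (eta t) - t) has_real_derivative 0) (at t within X)"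
proof -
  have "((\<lambda>t. psi q S (eta t)) has_real_derivative
      (- S / (eta t)^2 - real q / eta t) * (- (eta t)\<^sup>2 / (real q * eta t + S))) (at t within X)"
    by (rule DERIV_chain2[OF psi_deriv[OF pos] d])
  moreover have "(- S / (eta t)^2 - real q / eta t) * (- (eta t)\<^sup>2 / (real q * eta t + S)) = 1"
  proof -
    define e where "e = eta t"
    have D: "real q * e + S > 0" using q S pos unfolding e_def by (simp add: add_pos_nonneg)
    have e: "e > 0" using pos e_def by simp
    have 1: "- S / e^2 - real q / e = - (real q * e + S) / e^2"
      using e by (simp add: field_simps power2_eq_square)
    have "(- (real q * e + S) / e^2) * (- e\<^sup>2 / (real q * e + S)) = 1"
      using D e by (intro aux1) auto
    then show ?thesis using 1 unfolding e_def by simp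
  qed
  ultimately have "((\<lambda>t. psi q S (eta t)) has_real_derivative 1) (at t within X)" by simp
  then show ?thesis by (auto intro!: derivative_eq_intros)
qed

lemma psi_mono_strict:
  assumes q: "q \<ge> 1" and S: "S \<ge> 0" and "0 < b" "b < x" shows "psi q S x < psi q S b"
proof -
  obtain z where z: "b < z" "z < x" "psi q S x - psi q S b = (x - b) * (- S / z^2 - real q / z)"
    using MVT2[of b x "psi q S" "\<lambda>z. - S / z^2 - real q / z"] assms psi_deriv by force
  have zp: "z > 0" using z assms by simp
  have "S / z^2 \<ge> 0" using S zp by simp
  moreover have "real q / z > 0" using q zp by simp
  ultimately have "- S / z^2 - real q / z < 0" by simp
  moreover have "x - b > 0" using assms by simp
  ultimately have "(x - b) * (- S / z^2 - real q / z) < 0" by (simp add: mult_pos_neg)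
  then show ?thesis using z(3) by simp
qed

lemma psi_step:
  assumes q: "q \<ge> 1" and S: "S \<ge> 0" and a: "a > 0" and x: "hh q S a > 0"
  shows "psi q S (hh q S a) \<ge> psi q S a + 1"
proof -
  define x where "x = hh q S a"
  have D: "real q * a + S > 0" using q S a by (simp add: add_pos_nonneg)
  have ax: "a - x = a^2 / (real q * a + S)" unfolding x_def hh_def by simp
  have "a^2 / (real q * a + S) > 0" using D a by simp
  then have xa: "x < a" using ax by simp
  have x0: "x > 0" using x x_def by simp
  obtain z where z: "x < z" "z < a" "psi q S a - psi q S x = (a - x) * (- S / z^2 - real q / z)"
    using MVT2[of x a "psi q S" "\<lambda>z. - S / z^2 - real q / z"] xa x0 psi_deriv by force
  have zp: "z > 0" using z x0 by simp
  have "S / a^2 \<le> S / z^2"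
    using S zp z(2) by (intro divide_left_mono) (auto intro!: power_mono)
  moreover have "real q / a \<le> real q / z" using zp z(2) by (intro divide_left_mono) auto
  ultimately have le: "S / a^2 + real q / a \<le> S / z^2 + real q / z" by simp
  have "(a - x) * (S / a^2 + real q / a) = 1"
  proof -
    have "S / a^2 + real q / a = (real q * a + S) / a^2" using a by (simp add: field_simps power2_eq_square)
    then have "(a - x) * (S / a^2 + real q / a) = (a^2 / (real q * a + S)) * ((real q * a + S) / a^2)"
      using ax by simp
    also have "\<dots> = 1" using D a by simp
    finally show ?thesis .
  qed
  moreover have "(a - x) * (S / a^2 + real q / a) \<le> (a - x) * (S / z^2 + real q / z)"
    using le xa by (intro mult_left_mono) auto
  ultimately have "1 \<le> psi q S x - psi q S a" using z(3) by (simp add: algebra_simps)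
  then show ?thesis unfolding x_def by simp
qed

lemma ode_main:
  fixes eta :: "real \<Rightarrow> real" and q :: nat and S a0 :: real
  assumes q: "q \<ge> 1" and S: "S \<ge> 0" and a0: "a0 \<ge> 0" and init: "eta 0 = a0"
    and zero: "a0 = 0 \<Longrightarrow> S = 0"
    and ode: "\<And>t. t \<ge> 0 \<Longrightarrow>
        (eta has_real_derivative (- (eta t)\<^sup>2 / (real q * eta t + S))) (at t within {0..})"
    and t: "t \<ge> 0"
  shows "hh q S (eta t) \<le> eta (t + 1)"
proof -
  have cont: "continuous_on {0..} eta"
    unfolding continuous_on_eq_continuous_within using ode by (auto intro: DERIV_continuous)
  show ?thesis
  proof (cases "a0 = 0")
    case True
    then have S0: "S = 0" using zero by simp
    define w where "w t = eta t * exp (t / real q)" for t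
    have "((w has_real_derivative 0) (at t within {0..}))" if "t \<in> {0..}" for t
    proof -
      have "(w has_real_derivative
          (- (eta t)\<^sup>2 / (real q * eta t + S)) * exp (t / real q) + eta t * (exp (t / real q) * (1 / real q)))
          (at t within {0..})"
        unfolding w_def using ode[of t] that q
        by (auto intro!: derivative_eq_intros)
      moreover have "(- (eta t)\<^sup>2 / (real q * eta t + S)) * exp (t / real q) + eta t * (exp (t / real q) * (1 / real q)) = 0"
      proof (cases "eta t = 0")
        case True then show ?thesis by simp
      next
        case False
        have "(eta t)\<^sup>2 / (real q * eta t) = eta t / real q"
          using False q by (simp add: power2_eq_square)
        then show ?thesis unfolding S0 by (simp add: algebra_simps)
      qed
      ultimately show ?thesis by simp
    qed
    then obtain c where c: "\<forall>t\<in>{0..}. w t = c"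
      using has_field_derivative_zero_constant[of "{0..}" w] by (auto simp: convex_real_interval)
    have "eta t = 0" if "t \<ge> 0" for t
    proof -
      have "w t = w 0" using c that by simp
      then have "eta t * exp (t / real q) = 0" unfolding w_def using init True by simp
      then show ?thesis by simp
    qed
    then show ?thesis using t unfolding hh_def by simp
  next
    case False
    then have a0p: "a0 > 0" using a0 by simp
    have pos: "eta t > 0" if "t \<ge> 0" for t
    proof (rule ccontr)
      assume "\<not> eta t > 0"
      define Z where "Z = {0..t} \<inter> eta -` {..0}"
      have "closed Z" unfolding Z_def
        by (rule continuous_closed_preimage) (use cont in \<open>auto intro: continuous_on_subset\<close>)
      moreover have "Z = Z \<inter> {0..t}" unfolding Z_def by blast
      ultimately have "compact Z" by (metis closed_Int_compact compact_Icc)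
      moreover have "Z \<noteq> {}" using \<open>\<not> eta t > 0\<close> that unfolding Z_def by auto
      ultimately obtain s where s: "s \<in> Z" "\<And>u. u \<in> Z \<Longrightarrow> s \<le> u"
        using compact_attains_inf[of Z] by meson
      have s0: "s \<ge> 0" "eta s \<le> 0" "s \<le> t" using s(1) unfolding Z_def by auto
      have sp: "s > 0" using s0 init a0p by (cases "s = 0") auto
      have below: "eta u > 0" if "0 \<le> u" "u < s" for u
      proof (rule ccontr)
        assume "\<not> eta u > 0"
        then have "u \<in> Z" using that s0 unfolding Z_def by auto
        then show False using s(2) that by fastforce
      qed
      have "((\<lambda>u. psi q S (eta u) - u) has_real_derivative 0) (at u within {0..<s})" if "u \<in> {0..<s}" for u
      proof -
        have u0: "u \<ge> 0" using that by simp
        have "(eta has_real_derivative (- (eta u)\<^sup>2 / (real q * eta u + S))) (at u within {0..<s})"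
          by (rule DERIV_subset[OF ode[OF u0]]) auto
        then show ?thesis using that below by (intro lyap_deriv[OF q S]) auto
      qed
      then obtain c where c: "\<forall>u\<in>{0..<s}. psi q S (eta u) - u = c"
        using has_field_derivative_zero_constant[of "{0..<s}" "\<lambda>u. psi q S (eta u) - u"] by (auto simp: convex_real_interval)
      define \<delta> where "\<delta> = exp (- (s + c) / real q)"
      have dp: "\<delta> > 0" unfolding \<delta>_def by simp
      have lowb: "eta u \<ge> \<delta>" if "0 \<le> u" "u < s" for u
      proof -
        have eu: "eta u > 0" using below that by simp
        have "S / eta u - real q * ln (eta u) - u = c" using c that unfolding psi_def by simp
        then have "S / eta u - real q * ln (eta u) = u + c" by linarith
        moreover have "S / eta u \<ge> 0" using S eu by simp
        ultimately have "real q * ln (eta u) \<ge> - (s + c)" using that by linarith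
        then have "ln (eta u) \<ge> - (s + c) / real q" using q by (simp add: field_simps)
        then have "exp (- (s + c) / real q) \<le> exp (ln (eta u))" by simp
        then show ?thesis unfolding \<delta>_def using eu by simp
      qed
      have "continuous_on {0..s} eta" using cont by (rule continuous_on_subset) auto
      moreover have "eta s \<le> \<delta> / 2" using s0 dp by simp
      moreover have "\<delta> / 2 \<le> eta 0" using lowb[of 0] sp dp by simp
      ultimately obtain x where x: "0 \<le> x" "x \<le> s" "eta x = \<delta> / 2"
        using IVT2'[of eta s "\<delta> / 2" 0] sp by auto
      show False
      proof (cases "x = s")
        case True then show False using x s0 dp by simp
      next
        case False then show False using lowb[of x] x dp by simp
      qed
    qed
    have "((\<lambda>u. psi q S (eta u) - u) has_real_derivative 0) (at u within {0..})" if "u \<in> {0..}" for u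
      using that pos by (intro lyap_deriv[OF q S _ ode]) auto
    then obtain c where c: "\<forall>u\<in>{0..}. psi q S (eta u) - u = c"
      using has_field_derivative_zero_constant[of "{0..}" "\<lambda>u. psi q S (eta u) - u"] by (auto simp: convex_real_interval)
    have ps: "psi q S (eta (t + 1)) = psi q S (eta t) + 1"
      using c t by (metis atLeast_iff add_nonneg_nonneg zero_le_one diff_eq_eq add.commute add.left_commute)
    show ?thesis
    proof (cases "hh q S (eta t) > 0")
      case False then show ?thesis using pos[of "t+1"] t by simp
    next
      case True
      show ?thesis
      proof (rule ccontr)
        assume "\<not> hh q S (eta t) \<le> eta (t + 1)"
        then have "psi q S (hh q S (eta t)) < psi q S (eta (t + 1))"
          using psi_mono_strict[OF q S, of "eta (t+1)"] pos[of "t+1"] t by simp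
        moreover have "psi q S (hh q S (eta t)) \<ge> psi q S (eta t) + 1"
          using psi_step[OF q S pos[OF t] True] .
        ultimately show False using ps by simp
      qed
    qed
  qed
qed


lemma hh_nonneg:
  assumes q: "q \<ge> 1" and S: "S \<ge> 0" and x: "x \<ge> 0"
  shows "hh q S x \<ge> 0"
proof (cases "x = 0")
  case True then show ?thesis by (simp add: hh_def)
next
  case False
  then have x': "x > 0" using x by simp
  have D: "real q * x + S > 0" using q S x' by (simp add: add_pos_nonneg)
  have "1 * x \<le> real q * x" using q x' by (intro mult_right_mono) auto
  then have "x \<le> real q * x + S" using S by simp
  then have "x * x \<le> x * (real q * x + S)" using x' by (intro mult_left_mono) auto
  then have "x^2 \<le> x * (real q * x + S)" by (simp add: power2_eq_square)
  then have "x^2 / (real q * x + S) \<le> x" using D by (simp add: divide_le_eq)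
  then show ?thesis unfolding hh_def by simp
qed

lemma hh_mono:
  assumes q: "q \<ge> 1" and S: "S \<ge> 0" and x: "0 \<le> x" and xy: "x \<le> y"
  shows "hh q S x \<le> hh q S y"
proof (cases "real q * x + S = 0")
  case True
  have "real q * x \<ge> 0" using x by simp
  then have "real q * x = 0" using True S by linarith
  then have "x = 0" using q by simp
  then show ?thesis using hh_nonneg[OF q S, of y] x xy by (simp add: hh_def)
next
  case False
  define A where "A = real q * x + S"
  define B where "B = real q * y + S"
  have "real q * x \<ge> 0" using x by simp
  then have A: "A > 0" using False S unfolding A_def by linarith
  have "real q * x \<le> real q * y" using xy by (intro mult_left_mono) auto
  then have B: "B > 0" using A unfolding A_def B_def by linarith
  have key: "y^2 * A - x^2 * B = (y - x) * (real q * x * y + S * (x + y))"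
    unfolding A_def B_def by (simp add: algebra_simps power2_eq_square)
  have AB: "A * B \<ge> real q * x * y + S * (x + y)"
  proof -
    have "A * B = real q * real q * x * y + real q * S * (x + y) + S * S"
      unfolding A_def B_def by (simp add: algebra_simps)
    moreover have "real q * real q * x * y \<ge> real q * x * y"
    proof -
      have "real q * x * y \<ge> 0" using x xy by simp
      then have "real q * (real q * x * y) \<ge> 1 * (real q * x * y)" using q
        by (intro mult_right_mono) auto
      then show ?thesis by (simp add: mult.assoc)
    qed
    moreover have "real q * S * (x + y) \<ge> S * (x + y)"
    proof -
      have "S * (x + y) \<ge> 0" using S x xy by simp
      then have "real q * (S * (x + y)) \<ge> 1 * (S * (x + y))" using q
        by (intro mult_right_mono) auto
      then show ?thesis by (simp add: mult.assoc)
    qed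
    moreover have "S * S \<ge> 0" by simp
    ultimately show ?thesis by linarith
  qed
  have "y^2 / B - x^2 / A = (y^2 * A - x^2 * B) / (A * B)"
    using A B by (simp add: field_simps)
  also have "\<dots> = (y - x) * ((real q * x * y + S * (x + y)) / (A * B))"
    unfolding key by simp
  also have "\<dots> \<le> (y - x) * 1"
  proof (rule mult_left_mono)
    show "(real q * x * y + S * (x + y)) / (A * B) \<le> 1" using AB A B by (simp add: divide_le_eq)
  qed (use xy in simp)
  finally have "y^2 / B - x^2 / A \<le> y - x" by simp
  then show ?thesis unfolding hh_def A_def[symmetric] B_def[symmetric] by simp
qed

lemma mu_bounds:
  assumes d: "\<And>i. i < n \<Longrightarrow> d i \<ge> 0"
  shows "\<And>i. i < n \<Longrightarrow> 0 \<le> museq n d r i \<and> museq n d r i \<le> d i"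
proof (induction r)
  case 0 then show ?case using d by simp
next
  case (Suc r)
  define T where "T = (\<Sum>j<n. museq n d r j)"
  have nn: "\<And>j. j < n \<Longrightarrow> museq n d r j \<ge> 0" using Suc.IH by blast
  have le: "museq n d r i \<le> T" unfolding T_def
    using nn Suc.prems by (intro member_le_sum) auto
  have mi: "museq n d r i \<ge> 0" using nn Suc.prems by blast
  have sq: "(1 / T) * (museq n d r i)^2 \<ge> 0" using le mi by simp
  have sq2: "(1 / T) * (museq n d r i)^2 \<le> museq n d r i"
  proof (cases "T = 0")
    case True then show ?thesis using mi by simp
  next
    case False
    then have Tp: "T > 0" using le mi by simp
    have "(museq n d r i)^2 \<le> T * museq n d r i"
      using le mi by (simp add: power2_eq_square mult_right_mono)
    then show ?thesis using Tp by (simp add: field_simps)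
  qed
  show ?case using sq sq2 Suc.IH[OF Suc.prems] unfolding T_def by simp
qed

lemma max_step:
  fixes d :: "nat \<Rightarrow> real" and q n :: nat and S :: real
  assumes d: "\<And>i. i < n \<Longrightarrow> d i \<ge> 0" and q: "1 \<le> q" "q \<le> n"
    and S: "S = (\<Sum>i\<in>{q..<n}. d i)"
  shows "Max (museq n d (Suc r) ` {..<n}) \<le> hh q S (Max (museq n d r ` {..<n}))"
proof -
  define mu where "mu = museq n d r"
  define m where "m = Max (mu ` {..<n})"
  define T where "T = (\<Sum>j<n. mu j)"
  have bb: "0 \<le> mu j \<and> mu j \<le> d j" if "j < n" for j
    using mu_bounds[of n d j r] d that unfolding mu_def by blast
  have nn: "\<And>j. j < n \<Longrightarrow> mu j \<ge> 0" and led: "\<And>j. j < n \<Longrightarrow> mu j \<le> d j"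
    using bb by auto
  have "0 \<in> {..<n}" using q by simp
  then have ne: "{..<n} \<noteq> {}" by blast
  have "Max (mu ` {..<n}) \<in> mu ` {..<n}" using ne by (intro Max_in) auto
  then obtain k where k: "k < n" "mu k = m" unfolding m_def by (metis imageE lessThan_iff)
  have mge: "\<And>j. j < n \<Longrightarrow> mu j \<le> m" unfolding m_def by (intro Max_ge) auto
  have m0: "m \<ge> 0" using nn[OF k(1)] k(2) by simp
  have S0: "S \<ge> 0" unfolding S using d by (intro sum_nonneg) auto
  have Tle: "T \<le> real q * m + S"
  proof -
    have "T = (\<Sum>j<q. mu j) + (\<Sum>j\<in>{q..<n}. mu j)"
    proof -
      have "{..<n} = {0..<n}" by auto
      then have "T = (\<Sum>j\<in>{0..<n}. mu j)" unfolding T_def by simp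
      also have "\<dots> = (\<Sum>j\<in>{0..<q}. mu j) + (\<Sum>j\<in>{q..<n}. mu j)"
        using q by (intro sum.atLeastLessThan_concat[symmetric]) auto
      also have "{0..<q} = {..<q}" by auto
      finally show ?thesis .
    qed
    also have "(\<Sum>j<q. mu j) \<le> (\<Sum>j<q. m)" using mge q by (intro sum_mono) auto
    also have "(\<Sum>j\<in>{q..<n}. mu j) \<le> (\<Sum>j\<in>{q..<n}. d j)" using led by (intro sum_mono) auto
    finally show ?thesis unfolding S by simp
  qed
  have each: "mu j - (1 / T) * (mu j)^2 \<le> hh q S m" if j: "j < n" for j
  proof (cases "T = 0")
    case True
    have "mu j \<le> T" unfolding T_def using nn j by (intro member_le_sum) auto
    then have "mu j = 0" using nn[OF j] True by simp
    then show ?thesis using hh_nonneg[OF q(1) S0 m0] by simp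
  next
    case False
    have "T \<ge> 0" unfolding T_def using nn by (intro sum_nonneg) auto
    then have Tp: "T > 0" using False by simp
    have g: "mu j - (1 / T) * (mu j)^2 \<le> m - (1 / T) * m^2"
    proof (cases "j = k")
      case True then show ?thesis using k by simp
    next
      case False
      have "mu j + mu k \<le> T"
      proof -
        have "(\<Sum>i\<in>{j,k}. mu i) \<le> T" unfolding T_def using nn j k
          by (intro sum_mono2) auto
        then show ?thesis using False by simp
      qed
      then have s: "mu j + m \<le> T" using k by simp
      have e1: "(m - (1 / T) * m^2) - (mu j - (1 / T) * (mu j)^2) = (m - mu j) * (1 - (m + mu j) / T)"
        using Tp by (simp add: field_simps power2_eq_square)
      have e2: "m - mu j \<ge> 0" using mge j by simp
      have e3: "1 - (m + mu j) / T \<ge> 0" using s Tp by (simp add: field_simps)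
      have "(m - mu j) * (1 - (m + mu j) / T) \<ge> 0" using e2 e3 by (rule mult_nonneg_nonneg)
      then show ?thesis using e1 by linarith
    qed
    have "(1 / T) * m^2 \<ge> m^2 / (real q * m + S)"
    proof -
      have "m^2 / (real q * m + S) \<le> m^2 / T" using Tp Tle by (intro divide_left_mono) auto
      then show ?thesis by simp
    qed
    then show ?thesis using g unfolding hh_def by simp
  qed
  have "Max (museq n d (Suc r) ` {..<n}) \<le> hh q S m"
    using ne each unfolding mu_def T_def by (simp add: Max_le_iff)
  then show ?thesis unfolding m_def mu_def .
qed

theorem lemmaD2:
  fixes H :: "real mat" and n q :: nat and lam :: "nat \<Rightarrow> real" and eta :: "real \<Rightarrow> real"
  assumes H_carrier: "H \<in> carrier_mat n n"
    and H_sym: "transpose_mat H = H"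
    and H_psd: "psd_mat H"
    and lam_sorted: "\<And>i j. 1 \<le> i \<Longrightarrow> i \<le> j \<Longrightarrow> j \<le> n \<Longrightarrow> lam j \<le> lam i"
    and lam_nonneg: "\<And>i. 1 \<le> i \<Longrightarrow> i \<le> n \<Longrightarrow> lam i \<ge> 0"
    and lam_eigs: "char_poly H = (\<Prod>l=1..n. [:- lam l, 1:])"
    and q_range: "1 \<le> q" "q \<le> n"
    and eta_ode: "\<And>t. t \<ge> 0 \<Longrightarrow>
        (eta has_real_derivative
           (- (eta t)\<^sup>2 / (real q * eta t + (\<Sum>l=q+1..n. lam l)))) (at t within {0..})"
    and eta_init: "eta 0 = lam 1"
  shows "\<forall>r::nat. lambda_max ((Phi ^^ r) H) \<le> eta (real r)"
  
proof -
  define S where "S = (\<Sum>l=q+1..n. lam l)"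
  define d where "d i = lam (i + 1)" for i
  define es where "es = map lam [1..<Suc n]"
  have dnn: "\<And>i. i < n \<Longrightarrow> d i \<ge> 0" unfolding d_def using lam_nonneg by simp
  have Seq: "S = (\<Sum>i\<in>{q..<n}. d i)"
  proof -
    have "(\<Sum>i\<in>{q..<n}. d i) = (\<Sum>i\<in>{q..<n}. lam (i + 1))" unfolding d_def by simp
    also have "\<dots> = (\<Sum>l\<in>{q+1..<n+1}. lam l)" by (rule sum.shift_bounds_nat_ivl[symmetric])
    also have "{q+1..<n+1} = {q+1..n}" by auto
    finally show ?thesis unfolding S_def by simp
  qed
  have S0: "S \<ge> 0" unfolding S_def using lam_nonneg q_range by (intro sum_nonneg) auto
  have cp: "char_poly H = (\<Prod>e\<leftarrow>es. [:- e, 1:])"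
  proof -
    have st: "set [1..<Suc n] = {1..n}" by auto
    have "(\<Prod>l=1..n. [:- lam l, 1:]) = (\<Prod>l\<in>set [1..<Suc n]. [:- lam l, 1:])"
      by (simp only: st)
    also have "\<dots> = (\<Prod>l\<leftarrow>[1..<Suc n]. [:- lam l, 1:])"
      by (rule prod.distinct_set_conv_list) simp
    finally show ?thesis unfolding lam_eigs es_def by (simp add: o_def)
  qed
  obtain B P Q where BPQ: "schur_decomposition H es = (B, P, Q)" by (cases "schur_decomposition H es") auto
  have sd: "similar_mat_wit H B P Q" "upper_triangular B" "diag_mat B = es"
    using schur_decomposition[OF H_carrier cp BPQ] by auto
  have dimB: "dim_row B = n"
  proof -
    have "length (diag_mat B) = n" using sd(3) unfolding es_def by simp
    then show ?thesis by (simp add: diag_mat_def)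
  qed
  have Bdiag: "B $$ (i,i) = d i" if "i < n" for i
  proof -
    have "diag_mat B ! i = B $$ (i,i)" using that dimB by (simp add: diag_mat_def)
    moreover have "es ! i = lam (1 + i)" unfolding es_def using that
      by (simp del: upt_Suc add: nth_upt)
    ultimately show ?thesis using sd(3) unfolding d_def by simp
  qed
  have lmax: "lambda_max ((Phi ^^ r) H) = Max (museq n d r ` {..<n})" for r
  proof -
    obtain U where U: "similar_mat_wit ((Phi ^^ r) H) U P Q" "upper_triangular U" "U \<in> carrier_mat n n"
       "\<forall>i<n. U $$ (i,i) = museq n d r i"
      using invariant[OF H_carrier sd(1) sd(2) Bdiag, of r] by blast
    have MC: "(Phi ^^ r) H \<in> carrier_mat n n"
    proof -
      have "{(Phi ^^ r) H, U, P, Q} \<subseteq> carrier_mat (dim_row ((Phi ^^ r) H)) (dim_row ((Phi ^^ r) H))"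
        using U(1) unfolding similar_mat_wit_def Let_def by blast
      then have "(Phi ^^ r) H \<in> carrier_mat (dim_row ((Phi ^^ r) H)) (dim_row ((Phi ^^ r) H))"
        "U \<in> carrier_mat (dim_row ((Phi ^^ r) H)) (dim_row ((Phi ^^ r) H))" by auto
      then show ?thesis using U(3) by (metis carrier_matD(1))
    qed
    have "{k. eigenvalue ((Phi ^^ r) H) k} = (\<lambda>i. U $$ (i,i)) ` {..<n}"
      by (rule eig_set[OF MC U(1) U(2) U(3)])
    also have "\<dots> = museq n d r ` {..<n}" using U(4) by (intro image_cong) auto
    finally show ?thesis unfolding lambda_max_def by simp
  qed
  have m0: "Max (museq n d 0 ` {..<n}) = lam 1"
  proof -
    have "Max (d ` {..<n}) = d 0"
    proof (rule Max_eqI)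
      show "d 0 \<in> d ` {..<n}" using q_range by auto
    next
      fix y assume "y \<in> d ` {..<n}"
      then obtain i where "i < n" "y = d i" by auto
      then show "y \<le> d 0" unfolding d_def using lam_sorted[of 1 "i+1"] by simp
    qed simp
    then show ?thesis unfolding d_def by simp
  qed
  have zero: "lam 1 = 0 \<Longrightarrow> S = 0"
  proof -
    assume l1: "lam 1 = 0"
    have "lam l = 0" if l: "l \<in> {q+1..n}" for l
    proof -
      have l2: "1 \<le> l" "l \<le> n" using l q_range by auto
      have "lam l \<le> lam 1" using lam_sorted[of 1 l] l2 by simp
      moreover have "lam l \<ge> 0" using lam_nonneg[of l] l2 by simp
      ultimately show ?thesis using l1 by simp
    qed
    then show "S = 0" unfolding S_def by simp
  qed
  have ode': "\<And>t. t \<ge> 0 \<Longrightarrow> hh q S (eta t) \<le> eta (t + 1)"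
  proof -
    have l1nn: "lam 1 \<ge> 0" using lam_nonneg[of 1] q_range by simp
    have od: "\<And>t. t \<ge> 0 \<Longrightarrow> (eta has_real_derivative (- (eta t)\<^sup>2 / (real q * eta t + S))) (at t within {0..})"
      using eta_ode unfolding S_def .
    fix t :: real assume "t \<ge> 0"
    note r = ode_main[OF q_range(1) S0 l1nn eta_init zero od]
    show "hh q S (eta t) \<le> eta (t + 1)"
      using r[of t] \<open>t \<ge> 0\<close> by blast
  qed
  have main: "Max (museq n d r ` {..<n}) \<le> eta (real r)" for r
  proof (induction r)
    case 0 then show ?case using m0 eta_init by simp
  next
    case (Suc r)
    have mnn: "Max (museq n d r ` {..<n}) \<ge> 0"
    proof -
      have "museq n d r 0 \<ge> 0" using mu_bounds[of n d 0 r] dnn q_range by simp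
      also have "museq n d r 0 \<le> Max (museq n d r ` {..<n})" using q_range by (intro Max_ge) auto
      finally show ?thesis .
    qed
    have "Max (museq n d (Suc r) ` {..<n}) \<le> hh q S (Max (museq n d r ` {..<n}))"
      by (rule max_step[OF dnn q_range Seq])
    also have "\<dots> \<le> hh q S (eta (real r))"
      by (rule hh_mono[OF q_range(1) S0 mnn Suc.IH])
    also have "\<dots> \<le> eta (real r + 1)" by (rule ode') simp
    finally show ?case by (simp add: add.commute)
  qed
  show ?thesis using main lmax by simp
qed

end
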